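(* Let $X$ be a real Hilbert space and $Y$ a closed subspace of $X$. Let $S\colon X\to Y$ be a bounded linear operator such that the restriction $S|_Y\colon Y\to Y$ is surjective and injective, and such that $\langle x, Sx\rangle+\tfrac12\|Sx\|^2=0$ for all $x\in X$. Let $f\in\Gamma_0(X)$ with $f^*|_Y\in\Gamma_0(Y)$. Then the multifunction $[\partial(f^*|_Y)]\circ S|_Y\colon Y\rightrightarrows Y$ has a unique fixed point $e$ (i.e. a unique $e\in Y$ with $e\in\partial(f^*|_Y)(Se)$), and $$x\in X \text{ and } Sx\in\partial f(x)\ \Longrightarrow\ Sx=Se.$$ Furthermore: (a) If $x\in X$, $f(x)\in\mathbb{R}$ and $f(x)\le (f^*|_Y)^*(e)$, then $$Sx\in\partial f(x)\iff f^*(Sx)+\tfrac12\|Sx\|^2+f(x)=0\iff Sx=Se.$$ (b) If $x\in X$ and $f(x)=\min_X f$, then the equivalences in (a) hold, i.e. $Sx\in\partial f(x)\iff f^*(Sx)+\tfrac12\|Sx\|^2+f(x)=0\iff Sx=Se$.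
   Context: For a real Hilbert space $H$, $\Gamma_0(H)$ is the set of proper, convex, lower semicontinuous functions $H\to\,]-\infty,\infty]$. $f^*$ denotes the Fenchel conjugate of $f$ on $X$, $f^*(u)=\sup_{x\in X}(\langle x,u\rangle-f(x))$; $f^*|_Y$ is its restriction to $Y$, regarded as a function on the Hilbert space $Y$; $(f^*|_Y)^*$ is the Fenchel conjugate of $f^*|_Y$ computed in $Y$, and $\partial(f^*|_Y)$ is its subdifferential in $Y$. $\partial f$ is the subdifferential of $f$ on $X$. Since $Y\subseteq X$, $Sx\in Y$ is also regarded as an element of $X$. *)

theory Defs
  imports "HOL-Analysis.Analysis"
begin

text \<open>Extended-real-valued functions on a real Hilbert space, considered on a set Y
(Y = UNIV for the whole space X).\<close>

definition epi_on :: "'a set \<Rightarrow> ('a \<Rightarrow> ereal) \<Rightarrow> ('a \<times> real) set" where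
  "epi_on Y g = {(x, r). x \<in> Y \<and> g x \<le> ereal r}"

text \<open>Gamma0(Y): proper (never -infinity, somewhere finite), convex (convex epigraph),
lower semicontinuous (closed epigraph; Y is closed, so this is lsc on Y).\<close>
definition Gamma0_on :: "'a::real_normed_vector set \<Rightarrow> ('a \<Rightarrow> ereal) \<Rightarrow> bool" where
  "Gamma0_on Y g \<longleftrightarrow>
     (\<forall>x\<in>Y. g x \<noteq> -\<infinity>) \<and> (\<exists>x\<in>Y. g x \<noteq> \<infinity>) \<and>
     convex (epi_on Y g) \<and> closed (epi_on Y g)"

definition conj_on :: "'a::real_inner set \<Rightarrow> ('a \<Rightarrow> ereal) \<Rightarrow> 'a \<Rightarrow> ereal" where
  "conj_on Y g u = (SUP x\<in>Y. ereal (inner x u) - g x)"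

definition subdiff_on :: "'a::real_inner set \<Rightarrow> ('a \<Rightarrow> ereal) \<Rightarrow> 'a \<Rightarrow> 'a set" where
  "subdiff_on Y g x = {u \<in> Y. x \<in> Y \<and> g x \<noteq> \<infinity> \<and> g x \<noteq> -\<infinity> \<and>
     (\<forall>y\<in>Y. g x + ereal (inner (y - x) u) \<le> g y)}"

end

theory Submission
  imports Defs
begin

lemma polar_M:
  fixes T :: "'a::{real_inner,complete_space} \<Rightarrow> 'a"
  assumes lin: "linear T" and TY: "\<forall>x. T x \<in> Y" and bij: "bij_betw T Y Y"
    and id: "\<forall>x. inner x (T x) + (1/2) * (norm (T x))\<^sup>2 = 0"
    and z: "z \<in> Y" and y: "y \<in> Y"
  shows "inner (inv_into Y T z) y + inner (inv_into Y T y) z = - inner z y"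
proof -
  define a where "a = inv_into Y T z"
  define b where "b = inv_into Y T y"
  have Ta: "T a = z" using bij z unfolding a_def by (simp add: bij_betw_inv_into_right)
  have Tb: "T b = y" using bij y unfolding b_def by (simp add: bij_betw_inv_into_right)
  have "T (a + b) = z + y" using Ta Tb linear_add[OF lin] by simp
  have 1: "inner (a+b) (z+y) + (1/2) * (norm (z+y))\<^sup>2 = 0" using id[rule_format, of "a+b"] \<open>T (a + b) = z + y\<close> by simp
  have 2: "inner a z + (1/2) * (norm z)\<^sup>2 = 0" using id[rule_format, of a] Ta by simp
  have 3: "inner b y + (1/2) * (norm y)\<^sup>2 = 0" using id[rule_format, of b] Tb by simp
  have "inner a y + inner b z + inner z y = 0"
    using 1 2 3 by (simp add: power2_norm_eq_inner inner_add_left inner_add_right inner_commute algebra_simps)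
  then show ?thesis unfolding a_def b_def by simp
qed
lemma bounded_M:
  fixes T :: "'a::{real_inner,complete_space} \<Rightarrow> 'a"
  assumes sub: "subspace Y" and cl: "closed Y" and lin: "linear T" and TY: "\<forall>x. T x \<in> Y" and bij: "bij_betw T Y Y"
    and id: "\<forall>x. inner x (T x) + (1/2) * (norm (T x))\<^sup>2 = 0"
  shows "\<exists>C>0. \<forall>u\<in>Y. norm (inv_into Y T u) \<le> C * norm u"
proof -
  define M where "M = inv_into Y T"
  have MY: "M u \<in> Y" if "u \<in> Y" for u using bij that unfolding M_def
    by (metis bij_betw_def inv_into_into)
  have TM: "T (M u) = u" if "u \<in> Y" for u using bij that unfolding M_def by (simp add: bij_betw_inv_into_right)
  have MT: "M (T v) = v" if "v \<in> Y" for v using bij that unfolding M_def by (simp add: bij_betw_inv_into_left)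
  have pol: "inner (M z) y + inner (M y) z = - inner z y" if "z \<in> Y" "y \<in> Y" for z y
    using polar_M[OF lin TY bij id that] unfolding M_def .
  have Mlin: "M (a + c *\<^sub>R b) = M a + c *\<^sub>R M b" if "a \<in> Y" "b \<in> Y" for a b c
  proof -
    have "M a + c *\<^sub>R M b \<in> Y" using MY that sub by (simp add: subspace_add subspace_scale)
    moreover have "T (M a + c *\<^sub>R M b) = a + c *\<^sub>R b" using TM that lin by (simp add: linear_add linear_scale)
    ultimately show ?thesis using MT by metis
  qed
  define F where "F n = {u \<in> Y. norm (M u) \<le> real n}" for n :: nat
  have Fcl: "closed (F n)" for n
    unfolding closed_sequential_limits
  proof (intro allI impI, elim conjE)
    fix x l assume xF: "\<forall>k. x k \<in> F n" and lim: "x \<longlonglongrightarrow> l"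
    have xY: "x k \<in> Y" for k using xF F_def by auto
    have lY: "l \<in> Y" using cl lim xY closed_sequentially by blast
    define v where "v = M l"
    have vY: "v \<in> Y" using MY lY v_def by auto
    have eq: "inner (M (x k)) v = - inner (x k) v - inner (M v) (x k)" for k
      using pol[OF xY[of k] vY] by (simp add: algebra_simps)
    have "(\<lambda>k. - inner (x k) v - inner (M v) (x k)) \<longlonglongrightarrow> - inner l v - inner (M v) l"
      by (intro tendsto_intros lim)
    moreover have "- inner l v - inner (M v) l = inner v v"
      using pol[OF lY vY] v_def by (simp add: algebra_simps)
    ultimately have lim2: "(\<lambda>k. inner (M (x k)) v) \<longlonglongrightarrow> inner v v" using eq by simp
    have "inner (M (x k)) v \<le> real n * norm v" for k
    proof -
      have "inner (M (x k)) v \<le> norm (M (x k)) * norm v" by (rule norm_cauchy_schwarz)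
      also have "\<dots> \<le> real n * norm v" using xF[rule_format, of k] unfolding F_def
        by (auto intro: mult_right_mono)
      finally show ?thesis .
    qed
    hence "inner v v \<le> real n * norm v" using lim2 by (meson LIMSEQ_le_const2)
    moreover have "inner v v = norm v * norm v" by (simp add: power2_eq_square[symmetric] power2_norm_eq_inner)
    ultimately have "norm v * norm v \<le> real n * norm v" by simp
    hence "norm v \<le> real n"
      by (cases "norm v = 0") (auto simp: mult_le_cancel_right)
    thus "l \<in> F n" using lY v_def F_def by auto
  qed
  have "\<exists>n. (top_of_set Y) interior_of (F n) \<noteq> {}"
  proof (rule ccontr)
    assume nz: "\<not> (\<exists>n. (top_of_set Y) interior_of (F n) \<noteq> {})"
    have cm: "completely_metrizable_space (top_of_set Y)"
      using completely_metrizable_space_closedin completely_metrizable_space_euclidean closed_closedin cl by blast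
    have "closedin (top_of_set Y) (F n)" for n
      using closed_subset[of "F n" Y] Fcl[of n] unfolding F_def by blast
    have "(top_of_set Y) interior_of \<Union>(range F) = {}"
    proof (rule Baire_category_alt)
      show "completely_metrizable_space (top_of_set Y) \<or> locally_compact_space (top_of_set Y) \<and> regular_space (top_of_set Y)"
        using cm by blast
      show "countable (range F)" by simp
      fix S assume "S \<in> range F"
      then show "closedin (top_of_set Y) S \<and> top_of_set Y interior_of S = {}"
        using nz \<open>\<And>n. closedin (top_of_set Y) (F n)\<close> by blast
    qed
    moreover have "\<Union>(range F) = Y"
    proof
      show "\<Union>(range F) \<subseteq> Y" by (auto simp: F_def)
      show "Y \<subseteq> \<Union>(range F)"
      proof
        fix u assume "u \<in> Y"
        obtain n where "norm (M u) \<le> real n" using real_arch_simple by blast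
        thus "u \<in> \<Union>(range F)" using \<open>u \<in> Y\<close> by (auto simp: F_def)
      qed
    qed
    moreover have "0 \<in> Y" using sub by (simp add: subspace_0)
    ultimately show False using interior_of_topspace[of "top_of_set Y"] by simp
  qed
  then obtain n u0 where "u0 \<in> (top_of_set Y) interior_of (F n)" by blast
  then obtain U where U: "openin (top_of_set Y) U" "u0 \<in> U" "U \<subseteq> F n"
    unfolding interior_of_def by blast
  obtain \<epsilon> where \<epsilon>: "\<epsilon> > 0" "ball u0 \<epsilon> \<inter> Y \<subseteq> U"
    using U openin_contains_ball by metis
  have u0Y: "u0 \<in> Y" and Mu0: "norm (M u0) \<le> real n" using U F_def by auto
  define C where "C = 4 * real n / \<epsilon> + 1"
  have Cpos: "C > 0" using \<epsilon> by (simp add: C_def add_nonneg_pos)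
  have "norm (M y) \<le> C * norm y" if yY: "y \<in> Y" for y
  proof (cases "y = 0")
    case True
    have "M 0 = M 0 + (-1) *\<^sub>R M 0" using Mlin[of 0 0 "-1"] sub by (simp add: subspace_0)
    then have "M y = 0" using True by simp
    then show ?thesis using True by simp
  next
    case False
    define t where "t = \<epsilon> / (2 * norm y)"
    have tpos: "t > 0" using False \<epsilon> by (simp add: t_def)
    have "u0 + t *\<^sub>R y \<in> ball u0 \<epsilon>" using False \<epsilon> tpos
      by (simp add: t_def dist_norm)
    moreover have "u0 + t *\<^sub>R y \<in> Y" using u0Y yY sub by (simp add: subspace_add subspace_scale)
    ultimately have "u0 + t *\<^sub>R y \<in> F n" using \<epsilon> U by blast
    hence "norm (M (u0 + t *\<^sub>R y)) \<le> real n" by (simp add: F_def)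
    hence "norm (M u0 + t *\<^sub>R M y) \<le> real n" using Mlin[OF u0Y yY] by simp
    hence "norm (t *\<^sub>R M y) \<le> 2 * real n" using Mu0 norm_triangle_ineq4[of "M u0 + t *\<^sub>R M y" "M u0"]
      by simp
    hence "t * norm (M y) \<le> 2 * real n" using tpos by simp
    hence "norm (M y) \<le> 2 * real n / t" using tpos by (simp add: field_simps)
    also have "\<dots> = 4 * real n / \<epsilon> * norm y" using False \<epsilon> by (simp add: t_def field_simps)
    also have "\<dots> \<le> C * norm y" by (simp add: C_def distrib_right)
    finally show ?thesis .
  qed
  thus ?thesis using Cpos M_def by blast
qed

lemma G0_fin:
  assumes "Gamma0_on Y g" "p \<in> Y" "g p \<noteq> \<infinity>"
  shows "g p = ereal (real_of_ereal (g p))"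
  using assms unfolding Gamma0_on_def by (cases "g p") auto

lemma G0_convex:
  fixes g :: "'a::real_normed_vector \<Rightarrow> ereal"
  assumes G: "Gamma0_on Y g" and sub: "subspace Y" and p: "p \<in> Y" and q: "q \<in> Y"
    and gp: "g p \<noteq> \<infinity>" and gq: "g q \<noteq> \<infinity>" and t: "0 \<le> t" "t \<le> 1"
  shows "(1-t) *\<^sub>R p + t *\<^sub>R q \<in> Y \<and> g ((1-t) *\<^sub>R p + t *\<^sub>R q) \<noteq> \<infinity> \<and>
     real_of_ereal (g ((1-t) *\<^sub>R p + t *\<^sub>R q)) \<le> (1-t) * real_of_ereal (g p) + t * real_of_ereal (g q)"
proof -
  have cv: "convex (epi_on Y g)" using G unfolding Gamma0_on_def by blast
  have "(p, real_of_ereal (g p)) \<in> epi_on Y g" using G0_fin[OF G p gp] p unfolding epi_on_def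
    by (metis (mono_tags, lifting) case_prodI mem_Collect_eq order_refl)
  moreover have "(q, real_of_ereal (g q)) \<in> epi_on Y g" using G0_fin[OF G q gq] q unfolding epi_on_def
    by (metis (mono_tags, lifting) case_prodI mem_Collect_eq order_refl)
  ultimately have "(1-t) *\<^sub>R (p, real_of_ereal (g p)) + t *\<^sub>R (q, real_of_ereal (g q)) \<in> epi_on Y g"
    using cv t by (intro convexD) auto
  hence m: "(1-t) *\<^sub>R p + t *\<^sub>R q \<in> Y" and le: "g ((1-t) *\<^sub>R p + t *\<^sub>R q) \<le> ereal ((1-t) * real_of_ereal (g p) + t * real_of_ereal (g q))"
    unfolding epi_on_def by auto
  have "g ((1-t) *\<^sub>R p + t *\<^sub>R q) \<noteq> -\<infinity>" using G m unfolding Gamma0_on_def by blast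
  moreover have "g ((1-t) *\<^sub>R p + t *\<^sub>R q) \<noteq> \<infinity>" using le by auto
  ultimately obtain r where r: "g ((1-t) *\<^sub>R p + t *\<^sub>R q) = ereal r" by (cases "g ((1-t) *\<^sub>R p + t *\<^sub>R q)") auto
  have "r \<le> (1-t) * real_of_ereal (g p) + t * real_of_ereal (g q)" using le unfolding r by (simp only: ereal_less_eq(3))
  then show ?thesis using m r by simp
qed

lemma G0_lsc:
  fixes g :: "'a::real_normed_vector \<Rightarrow> ereal"
  assumes G: "Gamma0_on Y g" and P: "\<And>n. P n \<in> Y" and le: "\<And>n. g (P n) \<le> ereal (r n)"
    and lp: "P \<longlonglongrightarrow> p" and lr: "r \<longlonglongrightarrow> s"
  shows "p \<in> Y \<and> g p \<le> ereal s"
proof -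
  have cl: "closed (epi_on Y g)" using G unfolding Gamma0_on_def by blast
  have "\<forall>n. (P n, r n) \<in> epi_on Y g" using P le unfolding epi_on_def by auto
  moreover have "(\<lambda>n. (P n, r n)) \<longlonglongrightarrow> (p, s)" using lp lr by (rule tendsto_Pair)
  ultimately have "(p, s) \<in> epi_on Y g" using cl closed_sequentially[of "epi_on Y g" "\<lambda>n. (P n, r n)" "(p,s)"] by blast
  thus ?thesis unfolding epi_on_def by auto
qed

lemma par_id:
  fixes a b :: "'a::real_inner"
  shows "(norm ((1/2) *\<^sub>R (a + b)))\<^sup>2 = (norm a)\<^sup>2/2 + (norm b)\<^sup>2/2 - (norm (a - b))\<^sup>2/4"
proof -
  have "(norm ((1/2) *\<^sub>R (a + b)))\<^sup>2 = (inner a a + 2 * inner a b + inner b b)/4"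
    by (simp only: power2_norm_eq_inner) (simp add: inner_add_left inner_add_right inner_commute)
  moreover have "(norm (a - b))\<^sup>2 = inner a a - 2 * inner a b + inner b b"
    by (simp add: power2_norm_eq_inner inner_diff_left inner_diff_right inner_commute)
  moreover have "(norm a)\<^sup>2 = inner a a" "(norm b)\<^sup>2 = inner b b" by (simp_all add: power2_norm_eq_inner)
  ultimately show ?thesis by (simp only:) (simp add: field_simps)
qed
lemma lin_id:
  fixes a d :: "'a::real_inner"
  shows "(norm (a + t *\<^sub>R d))\<^sup>2 = (norm a)\<^sup>2 + 2 * t * inner a d + t\<^sup>2 * (norm d)\<^sup>2"
  by (simp only: power2_norm_eq_inner) (simp add: inner_add_left inner_add_right inner_commute power2_eq_square algebra_simps)

lemma small_le0:
  fixes a K :: real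
  assumes "\<And>t. 0 < t \<Longrightarrow> t \<le> 1 \<Longrightarrow> a \<le> t * K" "K \<ge> 0"
  shows "a \<le> 0"
proof (rule ccontr)
  assume "\<not> a \<le> 0"
  define t where "t = min 1 (a / (2 * (K + 1)))"
  have tp: "0 < t" "t \<le> 1" using \<open>\<not> a \<le> 0\<close> assms(2) by (auto simp: t_def)
  have "t * K \<le> a / (2 * (K + 1)) * K" using assms(2) by (intro mult_right_mono) (auto simp: t_def)
  also have "\<dots> < a" using \<open>\<not> a \<le> 0\<close> assms(2) by (simp add: field_simps) (intro add_nonneg_pos, auto)
  finally show False using assms(1)[OF tp] by simp
qed

lemma prox_exists:
  fixes g :: "'a::{real_inner,complete_space} \<Rightarrow> ereal"
  assumes G: "Gamma0_on Y g" and sub: "subspace Y" and cl: "closed Y"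
    and minor: "\<forall>p\<in>Y. ereal (inner a p + b) \<le> g p" and c: "c > 0" and z: "z \<in> Y"
  shows "\<exists>p\<in>Y. (2*c) *\<^sub>R (z - p) \<in> subdiff_on Y g p"
proof -
  define D where "D = {p\<in>Y. g p \<noteq> \<infinity>}"
  define gr where "gr p = real_of_ereal (g p)" for p
  define Q where "Q p = gr p + c * (norm (p - z))\<^sup>2" for p
  have gD: "g p = ereal (gr p)" if "p \<in> D" for p
    using G0_fin[OF G] that unfolding D_def gr_def by blast
  have minr: "inner a p + b \<le> gr p" if "p \<in> D" for p
    using minor gD[OF that] that unfolding D_def by auto
  define B where "B = b + inner a z - (norm a)\<^sup>2 / (4*c)"
  have QB: "B \<le> Q p" if "p \<in> D" for p
  proof -
    define r where "r = norm (p - z)"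
    have 1: "inner a p = inner a (p - z) + inner a z" by (simp add: inner_diff_right)
    have 2: "inner a (p - z) \<ge> - (norm a * r)"
      using norm_cauchy_schwarz[of "-a" "p - z"] by (simp add: r_def)
    have 3: "c * r\<^sup>2 - norm a * r + (norm a)\<^sup>2 / (4*c) = c * (r - norm a / (2*c))\<^sup>2"
      using c by (simp add: field_simps power2_eq_square)
    have 4: "c * (r - norm a / (2*c))\<^sup>2 \<ge> 0" using c by simp
    show ?thesis using minr[OF that] 1 2 3 4 unfolding Q_def B_def r_def[symmetric] by linarith
  qed
  obtain p1 where p1: "p1 \<in> Y" "g p1 \<noteq> \<infinity>" using G unfolding Gamma0_on_def by blast
  have Dne: "D \<noteq> {}" using p1 D_def by auto
  define m where "m = Inf (Q ` D)"
  have bdd: "bdd_below (Q ` D)" by (rule bdd_belowI2[where m=B]) (rule QB)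
  have mle: "m \<le> Q p" if "p \<in> D" for p unfolding m_def using bdd that by (simp add: cInf_lower)
  have ex: "\<exists>p\<in>D. Q p < m + e" if "e > 0" for e
  proof -
    have "Inf (Q ` D) < m + e" using that m_def by simp
    then obtain v where "v \<in> Q ` D" "v < m + e" using cInf_lessD[of "Q ` D"] Dne by blast
    thus ?thesis by blast
  qed
  have "\<forall>n. \<exists>p. p \<in> D \<and> Q p < m + inverse (real (Suc n))"
    using ex by (metis inverse_positive_iff_positive of_nat_0_less_iff zero_less_Suc)
  then obtain P where P: "\<And>n. P n \<in> D" "\<And>n. Q (P n) < m + inverse (real (Suc n))" by metis
  have mid: "(c/4) * (norm (p - q))\<^sup>2 \<le> (Q p + Q q)/2 - m" if p: "p \<in> D" and q: "q \<in> D" for p q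
  proof -
    have cv: "(1-1/2) *\<^sub>R p + (1/2) *\<^sub>R q \<in> Y \<and> g ((1-1/2) *\<^sub>R p + (1/2) *\<^sub>R q) \<noteq> \<infinity> \<and>
     real_of_ereal (g ((1-1/2) *\<^sub>R p + (1/2) *\<^sub>R q)) \<le> (1-1/2) * real_of_ereal (g p) + (1/2) * real_of_ereal (g q)"
      using p q unfolding D_def by (intro G0_convex[OF G sub]) auto
    define u where "u = (1-1/2) *\<^sub>R p + (1/2) *\<^sub>R q"
    have uD: "u \<in> D" using cv unfolding u_def D_def by blast
    have gu: "gr u \<le> (gr p + gr q)/2" using cv unfolding u_def gr_def by simp
    have iden: "(norm (u - z))\<^sup>2 = (norm (p - z))\<^sup>2/2 + (norm (q - z))\<^sup>2/2 - (norm (p - q))\<^sup>2/4"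
    proof -
      have "u - z = (1/2) *\<^sub>R ((p - z) + (q - z))" unfolding u_def by (simp add: algebra_simps scaleR_add_left[symmetric])
      moreover have "(p - z) - (q - z) = p - q" by simp
      ultimately show ?thesis using par_id[of "p - z" "q - z"] by simp
    qed
    have "m \<le> Q u" using mle[OF uD] .
    also have "Q u = gr u + c * ((norm (p - z))\<^sup>2/2 + (norm (q - z))\<^sup>2/2 - (norm (p - q))\<^sup>2/4)"
      unfolding Q_def iden ..
    also have "\<dots> = gr u + c * (norm (p - z))\<^sup>2/2 + c * (norm (q - z))\<^sup>2/2 - (c/4) * (norm (p - q))\<^sup>2"
      by (simp add: algebra_simps)
    finally show ?thesis using gu unfolding Q_def by (simp add: field_simps)
  qed
  have Cau: "Cauchy P"
  proof (rule CauchyI)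
    fix e :: real assume e: "e > 0"
    obtain N where N: "inverse (real (Suc N)) < c * e\<^sup>2 / 4"
      using reals_Archimedean[of "c * e\<^sup>2 / 4"] c e by auto
    show "\<exists>M. \<forall>k\<ge>M. \<forall>n\<ge>M. norm (P k - P n) < e"
    proof (intro exI allI impI)
      fix k n assume k: "N \<le> k" and n: "N \<le> n"
      have ik: "inverse (real (Suc k)) \<le> inverse (real (Suc N))" using k by (simp add: le_imp_inverse_le)
      have inn: "inverse (real (Suc n)) \<le> inverse (real (Suc N))" using n by (simp add: le_imp_inverse_le)
      have "(c/4) * (norm (P k - P n))\<^sup>2 \<le> (Q (P k) + Q (P n))/2 - m" by (rule mid[OF P(1) P(1)])
      also have "\<dots> < inverse (real (Suc N))" using P(2)[of k] P(2)[of n] ik inn by argo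
      also have "\<dots> < (c/4) * e\<^sup>2" using N by simp
      finally have "(norm (P k - P n))\<^sup>2 < e\<^sup>2" using c by simp
      thus "norm (P k - P n) < e" using e by (simp add: power_less_imp_less_base)
    qed
  qed
  then obtain p where lim: "P \<longlonglongrightarrow> p" using Cauchy_convergent convergent_def by blast
  have QP: "(\<lambda>n. Q (P n)) \<longlonglongrightarrow> m"
  proof (rule real_tendsto_sandwich)
    show "\<forall>\<^sub>F n in sequentially. m \<le> Q (P n)" using mle P(1) by simp
    show "\<forall>\<^sub>F n in sequentially. Q (P n) \<le> m + inverse (real (Suc n))" using P(2) less_imp_le by (intro always_eventually) blast
    show "(\<lambda>n. m) \<longlonglongrightarrow> m" by simp
    show "(\<lambda>n. m + inverse (real (Suc n))) \<longlonglongrightarrow> m" by (rule LIMSEQ_inverse_real_of_nat_add)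
  qed
  have rl: "(\<lambda>n. Q (P n) - c * (norm (P n - z))\<^sup>2) \<longlonglongrightarrow> m - c * (norm (p - z))\<^sup>2"
    by (intro tendsto_intros QP lim)
  have le: "g (P n) \<le> ereal (Q (P n) - c * (norm (P n - z))\<^sup>2)" for n
    using gD[OF P(1)[of n]] unfolding Q_def by simp
  have PY: "P n \<in> Y" for n using P(1) D_def by auto
  have "p \<in> Y \<and> g p \<le> ereal (m - c * (norm (p - z))\<^sup>2)"
    by (rule G0_lsc[OF G PY le lim rl])
  hence pY: "p \<in> Y" and gp: "g p \<le> ereal (m - c * (norm (p - z))\<^sup>2)" by auto
  have pD: "p \<in> D" using pY gp unfolding D_def by auto
  have Qp: "Q p \<le> m" using gp gD[OF pD] unfolding Q_def by simp
  have pmin: "Q p \<le> Q y" if "y \<in> D" for y using Qp mle[OF that] by linarith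
  define w where "w = (2*c) *\<^sub>R (z - p)"
  have wY: "w \<in> Y" unfolding w_def using sub z pY by (simp add: subspace_diff subspace_scale)
  have gpf: "g p \<noteq> \<infinity>" "g p \<noteq> -\<infinity>" using gD[OF pD] by auto
  have sg: "g p + ereal (inner (y - p) w) \<le> g y" if yY: "y \<in> Y" for y
  proof (cases "g y = \<infinity>")
    case True thus ?thesis by simp
  next
    case False
    hence yD: "y \<in> D" using yY D_def by auto
    define I where "I = inner (p - z) (y - p)"
    define N where "N = (norm (y - p))\<^sup>2"
    define a0 where "a0 = gr p - gr y - 2*c*I"
    have key: "a0 \<le> t * (c * N)" if t: "0 < t" "t \<le> 1" for t
    proof -
      have cv: "(1-t) *\<^sub>R p + t *\<^sub>R y \<in> Y \<and> g ((1-t) *\<^sub>R p + t *\<^sub>R y) \<noteq> \<infinity> \<and>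
        real_of_ereal (g ((1-t) *\<^sub>R p + t *\<^sub>R y)) \<le> (1-t) * real_of_ereal (g p) + t * real_of_ereal (g y)"
        using pD yD t unfolding D_def by (intro G0_convex[OF G sub]) auto
      define u where "u = (1-t) *\<^sub>R p + t *\<^sub>R y"
      have uD: "u \<in> D" using cv unfolding u_def D_def by blast
      have gu: "gr u \<le> (1-t) * gr p + t * gr y" using cv unfolding u_def gr_def by simp
      have iden: "(norm (u - z))\<^sup>2 = (norm (p - z))\<^sup>2 + 2*t*I + t^2 * N"
      proof -
        have "u - z = (p - z) + t *\<^sub>R (y - p)" unfolding u_def by (simp add: algebra_simps)
        thus ?thesis unfolding I_def N_def by (simp only: lin_id)
      qed
      have "Q p \<le> Q u" using pmin[OF uD] .
      hence "gr p + c * (norm (p - z))\<^sup>2 \<le> (1-t) * gr p + t * gr y + c * ((norm (p - z))\<^sup>2 + 2*t*I + t^2 * N)"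
        using gu unfolding Q_def iden by linarith
      moreover have "(1-t) * gr p + t * gr y + c * ((norm (p - z))\<^sup>2 + 2*t*I + t^2 * N)
          = gr p + c * (norm (p - z))\<^sup>2 - t * a0 + t * (t * (c * N))"
        unfolding a0_def by (simp add: algebra_simps power2_eq_square)
      ultimately have "t * a0 \<le> t * (t * (c * N))" by linarith
      thus ?thesis using t by simp
    qed
    have "a0 \<le> 0" by (rule small_le0[OF key]) (use c in \<open>auto simp: N_def\<close>)
    moreover have "inner (y - p) w = - 2*c*I" unfolding w_def I_def
      by (simp add: inner_diff_left inner_diff_right inner_commute algebra_simps)
    ultimately have "gr p + inner (y - p) w \<le> gr y" unfolding a0_def by linarith
    thus ?thesis using gD[OF pD] gD[OF yD] by simp
  qed
  have "w \<in> subdiff_on Y g p" unfolding subdiff_on_def using wY pY gpf sg by blast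
  thus ?thesis using pY w_def by blast
qed

lemma conj_ge:
  assumes "x \<in> Z"
  shows "ereal (inner x u) - h x \<le> conj_on Z h u"
  unfolding conj_on_def using assms by (rule SUP_upper2) simp

lemma sd_conj_le:
  assumes "e \<in> subdiff_on Z h v"
  shows "conj_on Z h e \<le> ereal (inner v e - real_of_ereal (h v))"
proof -
  from assms have v: "v \<in> Z" and f1: "h v \<noteq> \<infinity>" "h v \<noteq> -\<infinity>"
    and ineq: "\<forall>y\<in>Z. h v + ereal (inner (y - v) e) \<le> h y"
    unfolding subdiff_on_def by auto
  obtain r where r: "h v = ereal r" using f1 by (cases "h v") auto
  show ?thesis unfolding conj_on_def
  proof (rule SUP_least)
    fix y assume y: "y \<in> Z"
    have le: "ereal (r + inner (y - v) e) \<le> h y" using ineq y r by simp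
    show "ereal (inner y e) - h y \<le> ereal (inner v e - real_of_ereal (h v))"
    proof (cases "h y")
      case (real s)
      then have "r + inner (y - v) e \<le> s" using le by simp
      then show ?thesis using real r by (simp add: inner_diff_left)
    next
      case PInf then show ?thesis by simp
    next
      case MInf then show ?thesis using le by simp
    qed
  qed
qed

lemma sd_mono:
  assumes a: "a \<in> subdiff_on Z h p" and b: "b \<in> subdiff_on Z h q"
  shows "inner (p - q) (a - b) \<ge> 0"
proof -
  from a have p: "p \<in> Z" and fp: "h p \<noteq> \<infinity>" "h p \<noteq> -\<infinity>"
    and ia: "\<forall>y\<in>Z. h p + ereal (inner (y - p) a) \<le> h y" unfolding subdiff_on_def by auto
  from b have q: "q \<in> Z" and fq: "h q \<noteq> \<infinity>" "h q \<noteq> -\<infinity>"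
    and ib: "\<forall>y\<in>Z. h q + ereal (inner (y - q) b) \<le> h y" unfolding subdiff_on_def by auto
  obtain r where r: "h p = ereal r" using fp by (cases "h p") auto
  obtain s where s: "h q = ereal s" using fq by (cases "h q") auto
  have 1: "r + inner (q - p) a \<le> s" using ia q r s by force
  have 2: "s + inner (p - q) b \<le> r" using ib p r s by force
  have "inner (q - p) a = - inner (p - q) a" by (simp add: inner_diff_left)
  with 1 2 have "0 \<le> inner (p - q) a - inner (p - q) b" by linarith
  thus ?thesis by (simp add: inner_diff_right)
qed

lemma sdX_iff:
  assumes fx: "f x = ereal r"
  shows "w \<in> subdiff_on UNIV f x \<longleftrightarrow> conj_on UNIV f w = ereal (inner x w - r)"
proof
  assume w: "w \<in> subdiff_on UNIV f x"
  have "conj_on UNIV f w \<le> ereal (inner x w - r)" using sd_conj_le[OF w] fx by simp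
  moreover have "ereal (inner x w) - f x \<le> conj_on UNIV f w" by (rule conj_ge) simp
  ultimately show "conj_on UNIV f w = ereal (inner x w - r)" using fx by simp
next
  assume eq: "conj_on UNIV f w = ereal (inner x w - r)"
  have "f x + ereal (inner (y - x) w) \<le> f y" for y
  proof -
    have "ereal (inner y w) - f y \<le> ereal (inner x w - r)" using conj_ge[of y UNIV w f] eq by simp
    then show ?thesis
    proof (cases "f y")
      case (real s)
      then have "inner y w - s \<le> inner x w - r" using \<open>ereal (inner y w) - f y \<le> _\<close> by simp
      then show ?thesis using real fx by (simp add: inner_diff_left)
    next
      case PInf then show ?thesis by simp
    next
      case MInf then show ?thesis using \<open>ereal (inner y w) - f y \<le> _\<close> by simp
    qed
  qed
  then show "w \<in> subdiff_on UNIV f x" unfolding subdiff_on_def using fx by auto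
qed

lemma existence:
  fixes S :: "'a::{real_inner, complete_space} \<Rightarrow> 'a"
    and Y :: "'a set"
    and f :: "'a \<Rightarrow> ereal"
  assumes sub: "subspace Y" and cl: "closed Y"
    and bl: "bounded_linear S"
    and SY: "\<forall>x. S x \<in> Y"
    and bij: "bij_betw S Y Y"
    and id: "\<forall>x. inner x (S x) + (1/2) * (norm (S x))\<^sup>2 = 0"
    and Gf: "Gamma0_on UNIV f"
    and Gg: "Gamma0_on Y (conj_on UNIV f)"
  shows "\<exists>e\<in>Y. e \<in> subdiff_on Y (conj_on UNIV f) (S e)"
proof -
  define g where "g = conj_on UNIV f"
  have lin: "linear S" using bl bounded_linear.linear by blast
  define M where "M = inv_into Y S"
  have MY: "M u \<in> Y" if "u \<in> Y" for u using bij that unfolding M_def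
    by (metis bij_betw_def inv_into_into)
  have SM: "S (M u) = u" if "u \<in> Y" for u using bij that unfolding M_def by (simp add: bij_betw_inv_into_right)
  have MS: "M (S v) = v" if "v \<in> Y" for v using bij that unfolding M_def by (simp add: bij_betw_inv_into_left)
  have Mdiff: "M a - M b = M (a - b)" if "a \<in> Y" "b \<in> Y" for a b
  proof -
    have "M a - M b \<in> Y" using MY that sub by (simp add: subspace_diff)
    moreover have "S (M a - M b) = a - b" using SM that lin by (simp add: linear_diff)
    ultimately show ?thesis using MS by metis
  qed
  have Mw: "inner (M w) w = - (1/2) * (norm w)\<^sup>2" if "w \<in> Y" for w
    using polar_M[OF lin SY bij id that that] unfolding M_def[symmetric]
    by (simp add: power2_norm_eq_inner)
  obtain C where C: "C > 0" "\<forall>u\<in>Y. norm (M u) \<le> C * norm u"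
    using bounded_M[OF sub cl lin SY bij id] unfolding M_def by blast
  define C1 where "C1 = C + 1"
  define c where "c = C1\<^sup>2"
  define lam where "lam = 1 / (2 * c)"
  have C1: "C1 > 0" "C \<le> C1" using C by (auto simp: C1_def)
  have cpos: "c > 0" using C1 by (simp add: c_def)
  have lampos: "lam > 0" using cpos by (simp add: lam_def)
  have lamc: "(2 * c) * lam = 1" using cpos by (simp add: lam_def)
  obtain x0 where x0: "f x0 \<noteq> \<infinity>" using Gf unfolding Gamma0_on_def by blast
  have "f x0 \<noteq> -\<infinity>" using Gf unfolding Gamma0_on_def by blast
  then obtain r0 where r0: "f x0 = ereal r0" using x0 by (cases "f x0") auto
  have minor: "\<forall>p\<in>Y. ereal (inner x0 p + (- r0)) \<le> g p"
    using conj_ge[of x0 UNIV _ f] r0 unfolding g_def by simp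
  define pr where "pr z = (SOME p. p \<in> Y \<and> (2*c) *\<^sub>R (z - p) \<in> subdiff_on Y g p)" for z
  have pr: "pr z \<in> Y \<and> (2*c) *\<^sub>R (z - pr z) \<in> subdiff_on Y g (pr z)" if "z \<in> Y" for z
  proof -
    have "\<exists>p\<in>Y. (2*c) *\<^sub>R (z - p) \<in> subdiff_on Y g p"
      using prox_exists[OF Gg[folded g_def] sub cl minor cpos that] .
    then show ?thesis unfolding pr_def by (rule someI2_bex) blast
  qed
  have nonexp: "norm (pr z1 - pr z2) \<le> norm (z1 - z2)" if "z1 \<in> Y" "z2 \<in> Y" for z1 z2
  proof -
    let ?p1 = "pr z1" and ?p2 = "pr z2"
    have "inner (?p1 - ?p2) ((2*c) *\<^sub>R (z1 - ?p1) - (2*c) *\<^sub>R (z2 - ?p2)) \<ge> 0"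
      using sd_mono pr that by blast
    moreover have "(2*c) *\<^sub>R (z1 - ?p1) - (2*c) *\<^sub>R (z2 - ?p2) = (2*c) *\<^sub>R ((z1 - z2) - (?p1 - ?p2))"
      by (simp add: algebra_simps)
    ultimately have "(2*c) * inner (?p1 - ?p2) ((z1 - z2) - (?p1 - ?p2)) \<ge> 0"
      by simp
    hence "inner (?p1 - ?p2) ((z1 - z2) - (?p1 - ?p2)) \<ge> 0" using cpos
      by (simp add: zero_le_mult_iff)
    hence "(norm (?p1 - ?p2))\<^sup>2 \<le> inner (?p1 - ?p2) (z1 - z2)"
      by (simp add: inner_diff_right power2_norm_eq_inner)
    also have "\<dots> \<le> norm (?p1 - ?p2) * norm (z1 - z2)" by (rule norm_cauchy_schwarz)
    finally have "norm (?p1 - ?p2) * norm (?p1 - ?p2) \<le> norm (?p1 - ?p2) * norm (z1 - z2)"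
      by (simp add: power2_eq_square)
    thus ?thesis by (cases "norm (?p1 - ?p2) = 0") (auto simp: mult_le_cancel_left)
  qed
  define \<Phi> where "\<Phi> u = pr (u + lam *\<^sub>R M u)" for u
  have LY: "u + lam *\<^sub>R M u \<in> Y" if "u \<in> Y" for u
    using that MY sub by (simp add: subspace_add subspace_scale)
  have \<Phi>Y: "\<Phi> ` Y \<subseteq> Y" using pr LY unfolding \<Phi>_def by blast
  define k where "k = sqrt (1 - lam / 2)"
  have lam_le: "lam \<le> 1/2"
  proof -
    have "C1\<^sup>2 \<ge> 1" using C by (simp add: C1_def)
    hence "2 * c \<ge> 2" by (simp add: c_def)
    thus ?thesis unfolding lam_def by (simp add: field_simps)
  qed
  have k: "0 \<le> k" "k < 1" using lampos lam_le by (auto simp: k_def)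
  have contr: "norm (w + lam *\<^sub>R M w) \<le> k * norm w" if w: "w \<in> Y" for w
  proof -
    have "(norm (w + lam *\<^sub>R M w))\<^sup>2 = (norm w)\<^sup>2 + 2 * lam * inner w (M w) + lam\<^sup>2 * (norm (M w))\<^sup>2"
      by (rule lin_id)
    also have "inner w (M w) = - (1/2) * (norm w)\<^sup>2" using Mw[OF w] by (simp add: inner_commute)
    also have "lam\<^sup>2 * (norm (M w))\<^sup>2 \<le> lam\<^sup>2 * (C1 * norm w)\<^sup>2"
    proof -
      have "norm (M w) \<le> C1 * norm w" using C(2) w C1(2) by (meson dual_order.trans mult_right_mono norm_ge_zero)
      then show ?thesis by (intro mult_left_mono power_mono) auto
    qed
    then have "(norm w)\<^sup>2 + 2 * lam * (- (1/2) * (norm w)\<^sup>2) + lam\<^sup>2 * (norm (M w))\<^sup>2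
        \<le> (norm w)\<^sup>2 + 2 * lam * (- (1/2) * (norm w)\<^sup>2) + lam\<^sup>2 * (C1 * norm w)\<^sup>2" by simp
    also have "lam\<^sup>2 * (C1 * norm w)\<^sup>2 = (lam / 2) * (norm w)\<^sup>2"
      using cpos by (simp add: lam_def c_def power2_eq_square field_simps)
    also have "(norm w)\<^sup>2 + 2 * lam * (- (1/2) * (norm w)\<^sup>2) + (lam / 2) * (norm w)\<^sup>2 = (k * norm w)\<^sup>2"
      using lam_le by (simp add: k_def power_mult_distrib algebra_simps)
    finally have "(norm (w + lam *\<^sub>R M w))\<^sup>2 \<le> (k * norm w)\<^sup>2" .
    thus ?thesis using k by (meson mult_nonneg_nonneg norm_ge_zero power2_le_imp_le)
  qed
  have lip: "dist (\<Phi> u) (\<Phi> v) \<le> k * dist u v" if "u \<in> Y" "v \<in> Y" for u v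
  proof -
    have "dist (\<Phi> u) (\<Phi> v) \<le> norm ((u + lam *\<^sub>R M u) - (v + lam *\<^sub>R M v))"
      unfolding \<Phi>_def dist_norm using nonexp LY that by blast
    also have "(u + lam *\<^sub>R M u) - (v + lam *\<^sub>R M v) = (u - v) + lam *\<^sub>R M (u - v)"
    proof -
      have "(u + lam *\<^sub>R M u) - (v + lam *\<^sub>R M v) = (u - v) + lam *\<^sub>R (M u - M v)"
        by (simp add: algebra_simps)
      then show ?thesis using Mdiff[OF that] by simp
    qed
    also have "norm \<dots> \<le> k * norm (u - v)" using contr that sub by (simp add: subspace_diff)
    finally show ?thesis by (simp add: dist_norm)
  qed
  have "\<exists>!u\<in>Y. \<Phi> u = u"
  proof (rule Banach_fix[OF _ _ k \<Phi>Y lip])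
    show "complete Y" using cl by (simp add: complete_eq_closed)
    show "Y \<noteq> {}" using sub subspace_0 by blast
  qed
  then obtain u where u: "u \<in> Y" "\<Phi> u = u" by blast
  have "(2*c) *\<^sub>R ((u + lam *\<^sub>R M u) - u) \<in> subdiff_on Y g u"
    using pr[OF LY[OF u(1)]] u(2) unfolding \<Phi>_def by simp
  moreover have "(2*c) *\<^sub>R ((u + lam *\<^sub>R M u) - u) = M u" using lamc by simp
  ultimately have "M u \<in> subdiff_on Y g (S (M u))" using SM[OF u(1)] by simp
  thus ?thesis using MY[OF u(1)] g_def by blast
qed

theorem theorem3p1:
  fixes S :: "'a::{real_inner, complete_space} \<Rightarrow> 'a"
    and Y :: "'a set"
    and f :: "'a \<Rightarrow> ereal"
  assumes "subspace Y" and "closed Y"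
    and "bounded_linear S"
    and "\<forall>x. S x \<in> Y"
    and "bij_betw S Y Y"
    and "\<forall>x. inner x (S x) + (1/2) * (norm (S x))\<^sup>2 = 0"
    and "Gamma0_on UNIV f"
    and "Gamma0_on Y (conj_on UNIV f)"
  shows "\<exists>e\<in>Y. e \<in> subdiff_on Y (conj_on UNIV f) (S e)
      \<and> (\<forall>e'\<in>Y. e' \<in> subdiff_on Y (conj_on UNIV f) (S e') \<longrightarrow> e' = e)
      \<and> (\<forall>x. S x \<in> subdiff_on UNIV f x \<longrightarrow> S x = S e)
      \<and> (\<forall>x. f x \<noteq> \<infinity> \<and> f x \<noteq> -\<infinity> \<and> f x \<le> conj_on Y (conj_on UNIV f) e \<longrightarrow>
            (S x \<in> subdiff_on UNIV f x
               \<longleftrightarrow> conj_on UNIV f (S x) + ereal ((1/2) * (norm (S x))\<^sup>2) + f x = 0)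
          \<and> (conj_on UNIV f (S x) + ereal ((1/2) * (norm (S x))\<^sup>2) + f x = 0
               \<longleftrightarrow> S x = S e))
      \<and> (\<forall>x. (\<forall>y. f x \<le> f y) \<longrightarrow>
            (S x \<in> subdiff_on UNIV f x
               \<longleftrightarrow> conj_on UNIV f (S x) + ereal ((1/2) * (norm (S x))\<^sup>2) + f x = 0)
          \<and> (conj_on UNIV f (S x) + ereal ((1/2) * (norm (S x))\<^sup>2) + f x = 0
               \<longleftrightarrow> S x = S e))"
proof -
  let ?g = "conj_on UNIV f"
  note A = assms
  obtain e where eY: "e \<in> Y" and esd: "e \<in> subdiff_on Y ?g (S e)"
    using existence[OF assms] by blast
  have lin: "linear S" using A(3) bounded_linear.linear by blast
  have idx: "inner x (S x) = - (1/2) * (norm (S x))\<^sup>2" for x using A(6)[rule_format, of x] by linarith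
  have quad: "inner (a - b) (S a - S b) = - (1/2) * (norm (S a - S b))\<^sup>2" for a b
    using idx[of "a - b"] by (simp add: linear_diff[OF lin])
  obtain \<gamma> where \<gamma>: "?g (S e) = ereal \<gamma>" using esd unfolding subdiff_on_def by (cases "?g (S e)") auto
  have uniq: "e' = e" if "e' \<in> Y" "e' \<in> subdiff_on Y ?g (S e')" for e'
  proof -
    have "inner (S e' - S e) (e' - e) \<ge> 0" using sd_mono[OF that(2) esd] .
    hence "- (1/2) * (norm (S e' - S e))\<^sup>2 \<ge> 0" using quad[of e' e] by (simp add: inner_commute)
    hence "S e' = S e" by simp
    thus ?thesis using A(5) that(1) eY by (metis bij_betw_imp_inj_on inj_onD)
  qed
  have L2: "S x = S e" if sx: "S x \<in> subdiff_on UNIV f x" for x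
  proof -
    obtain r where r: "f x = ereal r" using sx unfolding subdiff_on_def by (cases "f x") auto
    have gx: "?g (S x) = ereal (inner x (S x) - r)" using sdX_iff[of f x r, OF r] sx by blast
    have 1: "inner x (S e) - r \<le> \<gamma>" using conj_ge[of x UNIV "S e" f] r \<gamma> by simp
    have "?g (S e) + ereal (inner (S x - S e) e) \<le> ?g (S x)"
      using esd A(4) unfolding subdiff_on_def by blast
    hence 2: "\<gamma> + inner (S x - S e) e \<le> inner x (S x) - r" using \<gamma> gx by simp
    have "inner (x - e) (S x - S e) = inner x (S x) - inner x (S e) - inner (S x - S e) e"
      by (simp add: inner_diff_left inner_diff_right inner_commute)
    hence "- (1/2) * (norm (S x - S e))\<^sup>2 \<ge> 0" using 1 2 quad[of x e] by linarith
    thus ?thesis by simp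
  qed
  have eqlem: "(a + ereal h + ereal r = 0) \<longleftrightarrow> a = ereal (- h - r)" for a :: ereal and h r
    by (cases a) auto
  have partA: "(S x \<in> subdiff_on UNIV f x
               \<longleftrightarrow> ?g (S x) + ereal ((1/2) * (norm (S x))\<^sup>2) + f x = 0)
          \<and> (?g (S x) + ereal ((1/2) * (norm (S x))\<^sup>2) + f x = 0
               \<longleftrightarrow> S x = S e)"
    if r: "f x = ereal r" and le: "f x \<le> conj_on Y ?g e" for x r
  proof -
    have eq1: "S x \<in> subdiff_on UNIV f x \<longleftrightarrow> ?g (S x) + ereal ((1/2) * (norm (S x))\<^sup>2) + f x = 0"
      unfolding r eqlem sdX_iff[of f x r, OF r] idx by simp
    moreover have "?g (S x) + ereal ((1/2) * (norm (S x))\<^sup>2) + f x = 0 \<longleftrightarrow> S x = S e"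
    proof
      assume "?g (S x) + ereal ((1/2) * (norm (S x))\<^sup>2) + f x = 0"
      thus "S x = S e" using eq1 L2 by blast
    next
      assume se: "S x = S e"
      have "conj_on Y ?g e \<le> ereal (inner (S e) e - \<gamma>)" using sd_conj_le[OF esd] \<gamma> by simp
      hence "ereal r \<le> ereal (inner (S e) e - \<gamma>)" using le r by (metis order_trans)
      hence 1: "r \<le> - (1/2) * (norm (S x))\<^sup>2 - \<gamma>" using se idx[of e] by (simp add: inner_commute)
      have 2: "inner x (S x) - r \<le> \<gamma>" using conj_ge[of x UNIV "S x" f] r \<gamma> se by simp
      have "\<gamma> = - ((1/2) * (norm (S x))\<^sup>2) - r" using 1 2 idx[of x] by linarith
      thus "?g (S x) + ereal ((1/2) * (norm (S x))\<^sup>2) + f x = 0" unfolding r eqlem using se \<gamma> by simp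
    qed
    ultimately show ?thesis by blast
  qed
  have partB: "f x \<noteq> \<infinity> \<and> f x \<noteq> -\<infinity> \<and> f x \<le> conj_on Y ?g e" if mn: "\<forall>y. f x \<le> f y" for x
  proof -
    obtain x0 where x0: "f x0 \<noteq> \<infinity>" using A(7) unfolding Gamma0_on_def by blast
    have ninf: "f x \<noteq> -\<infinity>" using A(7) unfolding Gamma0_on_def by blast
    have pinf: "f x \<noteq> \<infinity>" using mn[rule_format, of x0] x0 by (cases "f x0") auto
    then obtain r where r: "f x = ereal r" using ninf by (cases "f x") auto
    have "?g 0 \<le> ereal (- r)" unfolding conj_on_def
    proof (rule SUP_least)
      fix y :: 'a
      have "f x \<le> f y" using mn by blast
      then show "ereal (inner y 0) - f y \<le> ereal (- r)" using r by (cases "f y") auto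
    qed
    moreover have "ereal (inner 0 e) - ?g 0 \<le> conj_on Y ?g e"
      using conj_ge[of 0 Y e ?g] A(1) subspace_0 by blast
    ultimately have "f x \<le> conj_on Y ?g e" using r
    proof (cases "?g 0")
      case (real ra)
      assume "?g 0 \<le> ereal (- r)" "ereal (inner 0 e) - ?g 0 \<le> conj_on Y ?g e"
      then have "ereal r \<le> ereal (- ra)" "ereal (- ra) \<le> conj_on Y ?g e" using real by auto
      then show ?thesis using r by (metis order_trans)
    qed auto
    thus ?thesis using pinf ninf by blast
  qed
  show ?thesis
    apply (rule bexI[OF _ eY])
    apply (intro conjI)
        apply (rule esd)
       apply (use uniq in blast)
      apply (use L2 in blast)
    subgoal
    proof (intro allI impI)
      fix x assume h: "f x \<noteq> \<infinity> \<and> f x \<noteq> -\<infinity> \<and> f x \<le> conj_on Y ?g e"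
      then obtain r where "f x = ereal r" by (cases "f x") auto
      then show "(S x \<in> subdiff_on UNIV f x
               \<longleftrightarrow> ?g (S x) + ereal ((1/2) * (norm (S x))\<^sup>2) + f x = 0)
          \<and> (?g (S x) + ereal ((1/2) * (norm (S x))\<^sup>2) + f x = 0
               \<longleftrightarrow> S x = S e)" using partA h by blast
    qed
    subgoal
    proof (intro allI impI)
      fix x assume h: "\<forall>y. f x \<le> f y"
      then have h2: "f x \<noteq> \<infinity> \<and> f x \<noteq> -\<infinity> \<and> f x \<le> conj_on Y ?g e" by (rule partB)
      then obtain r where "f x = ereal r" by (cases "f x") auto
      then show "(S x \<in> subdiff_on UNIV f x
               \<longleftrightarrow> ?g (S x) + ereal ((1/2) * (norm (S x))\<^sup>2) + f x = 0)
          \<and> (?g (S x) + ereal ((1/2) * (norm (S x))\<^sup>2) + f x = 0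
               \<longleftrightarrow> S x = S e)" using partA h2 by blast
    qed
    done
qed

end
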